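(* For $q>1$ let $N_q$ be a random variable with $\mathbb{P}\{N_q=k\}=\frac{1}{e_{q^{-2}}(q^{-1})}\frac{q^{-k}}{(q^{-2};q^{-2})_k}$, $k=0,1,2,\dots$. Then as $q\downarrow1$ the distribution of $2(\log q)N_q+\log(q-1)$ converges weakly to the distribution on $\mathbb{R}$ with density $x\mapsto\frac{1}{\sqrt{2\pi}}\exp\big(-\tfrac12(x+e^{-x})\big)$.
   Context: For $p\in(0,1)$: $(z;p)_k:=\prod_{j=0}^{k-1}(1-zp^j)$, $(z;p)_\infty:=\prod_{j\ge0}(1-zp^j)$, and $e_p(z):=1/(z;p)_\infty=\sum_{k\ge0}z^k/(p;p)_k$ for $|z|<1$. *)

theory Defs
  imports "HOL-Probability.Probability"
begin

definition qpoch :: "real \<Rightarrow> real \<Rightarrow> nat \<Rightarrow> real" where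
  "qpoch z p k = (\<Prod>j<k. 1 - z * p ^ j)"

definition e_q :: "real \<Rightarrow> real \<Rightarrow> real" where
  "e_q p z = (\<Sum>k. z ^ k / qpoch p p k)"

definition pN :: "real \<Rightarrow> nat \<Rightarrow> real" where
  "pN q k = (1 / e_q ((inverse q)^2) (inverse q)) * ((inverse q) ^ k / qpoch ((inverse q)^2) ((inverse q)^2) k)"

definition N_law :: "real \<Rightarrow> nat measure" where
  "N_law q = density (count_space UNIV) (\<lambda>k. ennreal (pN q k))"

definition scaled_law :: "real \<Rightarrow> real measure" where
  "scaled_law q = distr (N_law q) borel (\<lambda>k. 2 * ln q * real k + ln (q - 1))"

definition limit_density :: "real \<Rightarrow> real" where
  "limit_density x = exp (- (x + exp (- x)) / 2) / sqrt (2 * pi)"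

definition limit_law :: "real measure" where
  "limit_law = density lborel (\<lambda>x. ennreal (limit_density x))"

end

theory Submission
  imports Defs
begin

definition PP :: "real \<Rightarrow> real" where "PP q = inverse q ^ 2"
definition LL :: "real \<Rightarrow> nat \<Rightarrow> real" where
  "LL q j = - ln (1 - PP q ^ (j+1))"
definition GG :: "real \<Rightarrow> nat \<Rightarrow> real" where
  "GG q k = (\<Sum>i. LL q (i + k))"
definition XX :: "real \<Rightarrow> nat \<Rightarrow> real" where
  "XX q k = 2 * ln q * real k + ln (q - 1)"
definition VV :: "real \<Rightarrow> nat \<Rightarrow> real" where
  "VV q k = exp (- XX q k / 2 - GG q k)"
definition ftil :: "real \<Rightarrow> real" where
  "ftil t = exp (- t / 2 - exp (- t) / 2)"

lemma ln_bounds: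
  fixes v :: real assumes "0 < v" "v < 1"
  shows "v \<le> - ln (1 - v)" "- ln (1 - v) \<le> v / (1 - v)"
proof -
  have "ln (1 - v) \<le> (1 - v) - 1" using assms by (intro ln_le_minus_one) auto
  then show "v \<le> - ln (1 - v)" by simp
  have "ln (1 / (1 - v)) \<le> 1 / (1 - v) - 1" using assms by (intro ln_le_minus_one) auto
  moreover have "ln (1 / (1 - v)) = - ln (1 - v)" using assms by (simp add: ln_div)
  moreover have "1 / (1 - v) - 1 = v / (1 - v)" using assms by (simp add: field_simps)
  ultimately show "- ln (1 - v) \<le> v / (1 - v)" by simp
qed

lemma P_bounds: assumes "q > (1::real)" shows "0 < PP q" "PP q < (1::real)"
  using assms unfolding PP_def by (auto simp: power_less_one_iff inverse_less_1_iff)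

lemma pow_lt1: "0 < (a::real) \<Longrightarrow> a < 1 \<Longrightarrow> a ^ (n+1) < 1"
  using power_strict_decreasing[of 0 "n+1" a] by simp

lemma LL_bounds:
  assumes "q > 1"
  shows "PP q ^ (j+1) \<le> LL q j"
    "LL q j \<le> PP q ^ (j+1) / (1 - PP q ^ (j+1))"
proof -
  let ?P = "PP q"
  have a: "0 < ?P ^ (j+1)" using P_bounds[OF assms] by simp
  have b: "?P ^ (j+1) < 1" using P_bounds[OF assms] by (rule pow_lt1)
  from ln_bounds[OF a b] show "?P ^ (j+1) \<le> LL q j"
    "LL q j \<le> ?P ^ (j+1) / (1 - ?P ^ (j+1))" unfolding LL_def by auto
qed

lemma LL_upper:
  assumes "q > 1" "k \<le> j"
  shows "LL q j \<le> PP q ^ (j+1) / (1 - PP q ^ (k+1))"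
proof -
  let ?P = "PP q"
  have P: "0 < ?P" "?P < 1" using P_bounds[OF assms(1)] by auto
  have "?P ^ (j+1) \<le> ?P ^ (k+1)" using P assms(2) by (intro power_decreasing) auto
  moreover have "?P ^ (k+1) < 1" using P by (rule pow_lt1)
  moreover have "?P ^ (j+1) < 1" using P by (rule pow_lt1)
  ultimately have "?P ^ (j+1) / (1 - ?P ^ (j+1)) \<le> ?P ^ (j+1) / (1 - ?P ^ (k+1))"
    using P by (intro divide_left_mono mult_pos_pos) auto
  with LL_bounds(2)[OF assms(1), of j] show ?thesis by linarith
qed

lemma geom_shift:
  fixes P :: real assumes "0 < P" "P < 1"
  shows "(\<lambda>i. P ^ (i + k + 1)) sums (P ^ (k+1) / (1 - P))"
proof -
  have "(\<lambda>i. P ^ i) sums (1 / (1 - P))" using assms by (intro geometric_sums) auto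
  then have "(\<lambda>i. P ^ (k+1) * P ^ i) sums (P ^ (k+1) * (1 / (1 - P)))"
    by (rule sums_mult)
  then show ?thesis by (simp add: power_add mult_ac)
qed

lemma LL_summable: assumes "q > 1" shows "summable (\<lambda>i. LL q (i + k))"
proof -
  let ?P = "PP q"
  have P: "0 < ?P" "?P < 1" using P_bounds[OF assms(1)] by auto
  have "summable (\<lambda>i. ?P ^ (i + k + 1) / (1 - ?P ^ (k+1)))"
    by (intro summable_divide sums_summable[OF geom_shift[OF P]])
  then show ?thesis
  proof (rule summable_comparison_test')
    fix i show "norm (LL q (i + k)) \<le> ?P ^ (i + k + 1) / (1 - ?P ^ (k+1))"
    proof -
      have "0 < ?P ^ (i + k + 1)" using P by simp
      then have "0 \<le> LL q (i + k)" using LL_bounds(1)[OF assms(1), of "i+k"] by linarith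
      then show ?thesis using LL_upper[OF assms(1), of k "i+k"] by (simp add: add_ac)
    qed
  qed
qed

lemma GG_bounds:
  assumes "q > 1"
  shows "PP q ^ (k+1) / (1 - PP q) \<le> GG q k"
        "GG q k \<le> PP q ^ (k+1) / (1 - PP q) / (1 - PP q ^ (k+1))"
proof -
  let ?P = "PP q"
  have P: "0 < ?P" "?P < 1" using P_bounds[OF assms(1)] by auto
  note g = geom_shift[OF P, of k]
  show "?P ^ (k+1) / (1 - ?P) \<le> GG q k" unfolding GG_def
    using g LL_summable[OF assms, of k] LL_bounds(1)[OF assms]
    by (intro sums_le[OF _ g summable_sums]) (auto simp: add_ac)
  have g2: "(\<lambda>i. ?P ^ (i + k + 1) / (1 - ?P ^ (k+1))) sums (?P ^ (k+1) / (1 - ?P) / (1 - ?P ^ (k+1)))"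
    using g by (rule sums_divide)
  note P1 = pow_lt1[OF P, of k]
  show "GG q k \<le> ?P ^ (k+1) / (1 - ?P) / (1 - ?P ^ (k+1))" unfolding GG_def
    using LL_upper[OF assms(1), of k] P1
    by (intro sums_le[OF _ summable_sums[OF LL_summable[OF assms]] g2]) (auto simp: add_ac)
qed

definition TT :: "real \<Rightarrow> real" where "TT q = (\<Sum>j. LL q j)"

lemma LL_nonneg: "q > 1 \<Longrightarrow> 0 \<le> LL q j"
  using LL_bounds(1)[of q j] P_bounds[of q] by (smt (verit) zero_less_power)

lemma GG_nonneg: "q > 1 \<Longrightarrow> 0 \<le> GG q k"
  unfolding GG_def using LL_summable[of q k] LL_nonneg[of q] by (intro suminf_nonneg) auto

lemma qpoch_eq: assumes "q > 1"
  shows "qpoch (PP q) (PP q) k = exp (- (\<Sum>j<k. LL q j))"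
proof -
  have "qpoch (PP q) (PP q) k = (\<Prod>j<k. exp (- LL q j))"
    unfolding qpoch_def
  proof (rule prod.cong)
    fix j assume "j \<in> {..<k}"
    have "PP q ^ (j+1) < 1" using P_bounds[OF assms] by (rule pow_lt1)
    then have "exp (- LL q j) = 1 - PP q ^ (j+1)" unfolding LL_def by simp
    then show "1 - PP q * PP q ^ j = exp (- LL q j)" by simp
  qed simp
  also have "\<dots> = exp (- (\<Sum>j<k. LL q j))" by (simp add: exp_sum[symmetric] sum_negf)
  finally show ?thesis .
qed

lemma sum_LL: assumes "q > 1" shows "(\<Sum>j<k. LL q j) = TT q - GG q k"
  using suminf_split_initial_segment[OF LL_summable[OF assms, of 0], of k] assms
  unfolding TT_def GG_def by simp

lemma exp_half_ln: "x > 0 \<Longrightarrow> exp (ln x / 2) = sqrt (x::real)"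
  by (simp add: powr_half_sqrt[symmetric] powr_def)

lemma iq_exp: assumes "q > 1" shows "inverse q ^ k = exp (- ln q * real k)"
proof -
  have "exp (- ln q * real k) = exp (- ln q) ^ k" by (simp add: exp_of_nat_mult[symmetric] mult.commute)
  also have "exp (- ln q) = inverse q" using assms by (simp add: exp_minus)
  finally show ?thesis by simp
qed

lemma exp_XX: assumes "q > 1" shows "exp (- XX q k / 2) = inverse q ^ k / sqrt (q - 1)"
proof -
  have e: "- XX q k / 2 = - ln q * real k + - (ln (q - 1) / 2)"
    unfolding XX_def by (simp add: field_simps)
  have "exp (- XX q k / 2) = exp (- ln q * real k) * exp (- (ln (q - 1) / 2))"
    unfolding e exp_add ..
  also have "exp (- (ln (q - 1) / 2)) = 1 / sqrt (q - 1)"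
    unfolding exp_minus exp_half_ln[of "q - 1"] using assms by (simp add: exp_half_ln inverse_eq_divide)
  finally show ?thesis using iq_exp[OF assms, of k] by simp
qed

lemma W_eq: assumes "q > 1"
  shows "inverse q ^ k / qpoch (PP q) (PP q) k = exp (TT q) * sqrt (q - 1) * VV q k"
proof -
  have s: "sqrt (q - 1) > 0" using assms by simp
  have V: "VV q k = inverse q ^ k / sqrt (q - 1) * exp (- GG q k)"
    unfolding VV_def diff_conv_add_uminus exp_add exp_XX[OF assms] ..
  have "inverse q ^ k / qpoch (PP q) (PP q) k = inverse q ^ k / exp (- (TT q - GG q k))"
    by (simp only: qpoch_eq[OF assms] sum_LL[OF assms])
  also have "\<dots> = inverse q ^ k * (exp (TT q) * exp (- GG q k))"
    by (simp add: exp_minus exp_diff divide_inverse)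
  also have "\<dots> = exp (TT q) * sqrt (q - 1) * VV q k"
    unfolding V using s by simp
  finally show ?thesis .
qed

lemma VV_le: assumes "q > 1" shows "VV q k \<le> inverse q ^ k / sqrt (q - 1)"
proof -
  have "VV q k \<le> exp (- XX q k / 2)" unfolding VV_def using GG_nonneg[OF assms, of k] by simp
  also have "exp (- XX q k / 2) = inverse q ^ k / sqrt (q - 1)" by (rule exp_XX[OF assms])
  finally show ?thesis .
qed

lemma VV_pos: "0 < VV q k" unfolding VV_def by simp

lemma VV_summable: assumes "q > 1" shows "summable (VV q)"
proof -
  have "summable (\<lambda>k. inverse q ^ k / sqrt (q - 1))"
    using assms by (intro summable_divide summable_geometric) (auto simp: inverse_less_1_iff)
  then show ?thesis
  proof (rule summable_comparison_test')
    fix k show "norm (VV q k) \<le> inverse q ^ k / sqrt (q - 1)"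
      using VV_le[OF assms, of k] VV_pos[of q k] by simp
  qed
qed

lemma e_q_eq: assumes "q > 1"
  shows "e_q (PP q) (inverse q) = exp (TT q) * sqrt (q - 1) * (\<Sum>k. VV q k)"
  unfolding e_q_def W_eq[OF assms]
  by (rule suminf_mult[OF VV_summable[OF assms]])

lemma sumVV_pos: assumes "q > 1" shows "0 < (\<Sum>k. VV q k)"
  using suminf_pos[OF VV_summable[OF assms]] VV_pos by auto

lemma pN_eq: assumes "q > 1" shows "pN q k = VV q k / (\<Sum>j. VV q j)"
proof -
  have "pN q k = (1 / e_q (PP q) (inverse q)) * (inverse q ^ k / qpoch (PP q) (PP q) k)"
    unfolding pN_def PP_def ..
  also have "\<dots> = VV q k / (\<Sum>j. VV q j)"
    unfolding e_q_eq[OF assms] W_eq[OF assms] using assms sumVV_pos[OF assms] by simp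
  finally show ?thesis .
qed

lemma summable_VV_ind: assumes "q > 1" shows "summable (\<lambda>k. VV q k * indicator A (XX q k))"
  by (rule summable_comparison_test'[OF VV_summable[OF assms]])
     (use VV_pos in \<open>auto split: split_indicator simp: less_imp_le\<close>)

lemma cdf_formula: assumes "q > 1"
  shows "cdf (scaled_law q) x = (\<Sum>k. VV q k * indicator {..x} (XX q k)) / (\<Sum>k. VV q k)"
proof -
  have meas: "(\<lambda>k. 2 * ln q * real k + ln (q - 1)) \<in> measurable (N_law q) borel"
    unfolding N_law_def by simp
  have "cdf (scaled_law q) x = measure (N_law q) {k. XX q k \<le> x}"
  proof -
    have "cdf (scaled_law q) x = measure (N_law q) ((\<lambda>k. 2 * ln q * real k + ln (q - 1)) -` {..x} \<inter> space (N_law q))"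
      unfolding cdf_def scaled_law_def by (rule measure_distr[OF meas]) simp
    also have "\<dots> = measure (N_law q) {k. XX q k \<le> x}" by (simp add: N_law_def XX_def vimage_def)
    finally show ?thesis .
  qed
  also have "\<dots> = (\<Sum>k. pN q k * indicator {..x} (XX q k))"
  proof -
    have nn: "\<And>k. 0 \<le> pN q k * indicator {..x} (XX q k)"
      using pN_eq[OF assms] VV_pos[of q] sumVV_pos[OF assms]
      by (simp add: less_imp_le)
    have sm: "summable (\<lambda>k. pN q k * indicator {..x} (XX q k))"
      unfolding pN_eq[OF assms] using summable_divide[OF summable_VV_ind[OF assms, of "{..x}"], of "\<Sum>k. VV q k"]
      by simp
    have "emeasure (N_law q) {k. XX q k \<le> x} = (\<Sum>k. ennreal (pN q k) * indicator {k. XX q k \<le> x} k)"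
      unfolding N_law_def by (simp add: emeasure_density nn_integral_count_space_nat)
    also have "\<dots> = (\<Sum>k. ennreal (pN q k * indicator {..x} (XX q k)))"
      by (intro suminf_cong) (auto split: split_indicator)
    also have "\<dots> = ennreal (\<Sum>k. pN q k * indicator {..x} (XX q k))"
      by (rule suminf_ennreal2[OF nn sm])
    finally show ?thesis unfolding measure_def
      using suminf_nonneg[OF sm nn] by simp
  qed
  also have "\<dots> = (\<Sum>k. VV q k * indicator {..x} (XX q k)) / (\<Sum>k. VV q k)"
    unfolding pN_eq[OF assms] using suminf_divide[OF summable_VV_ind[OF assms, of "{..x}"], of "\<Sum>k. VV q k"]
    by simp
  finally show ?thesis .
qed

definition UU :: "(real \<Rightarrow> real) \<Rightarrow> real \<Rightarrow> real \<Rightarrow> ennreal" where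
  "UU c q t = (\<Sum>k. ennreal (VV q k * c (XX q k)) * indicator {XX q k ..< XX q k + 2 * ln q} t)"

lemma summable_VV_c: assumes "q > 1" "\<And>y. 0 \<le> c y" "\<And>y. c y \<le> 1"
  shows "summable (\<lambda>k. VV q k * c (XX q k))"
proof (rule summable_comparison_test'[OF VV_summable[OF assms(1)]])
  fix k show "norm (VV q k * c (XX q k)) \<le> VV q k"
    using VV_pos[of q k] assms(2,3)[of "XX q k"] by (simp add: abs_mult mult_left_le)
qed

lemma UU_integral: assumes "q > 1" "\<And>y. 0 \<le> c y" "\<And>y. c y \<le> 1"
  shows "(\<integral>\<^sup>+t. UU c q t \<partial>lborel) = ennreal (2 * ln q * (\<Sum>k. VV q k * c (XX q k)))"
proof -
  have h: "0 < ln q" using assms by simp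
  have sm: "summable (\<lambda>k. VV q k * c (XX q k))" by (rule summable_VV_c) (use assms in auto)
  have "(\<integral>\<^sup>+t. UU c q t \<partial>lborel) =
     (\<Sum>k. \<integral>\<^sup>+t. ennreal (VV q k * c (XX q k)) * indicator {XX q k ..< XX q k + 2 * ln q} t \<partial>lborel)"
    unfolding UU_def by (rule nn_integral_suminf) simp
  also have "\<dots> = (\<Sum>k. ennreal (VV q k * c (XX q k) * (2 * ln q)))"
  proof (rule suminf_cong)
    fix k
    have a: "0 \<le> VV q k * c (XX q k)" using VV_pos[of q k] assms(2)[of "XX q k"] by simp
    have "(\<integral>\<^sup>+t. ennreal (VV q k * c (XX q k)) * indicator {XX q k ..< XX q k + 2 * ln q} t \<partial>lborel)
       = ennreal (VV q k * c (XX q k)) * ennreal (2 * ln q)"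
      using h by (subst nn_integral_cmult_indicator) auto
    also have "\<dots> = ennreal (VV q k * c (XX q k) * (2 * ln q))"
      using a h by (simp only: ennreal_mult[symmetric])
    finally show "(\<integral>\<^sup>+t. ennreal (VV q k * c (XX q k)) * indicator {XX q k ..< XX q k + 2 * ln q} t \<partial>lborel)
       = ennreal (VV q k * c (XX q k) * (2 * ln q))" .
  qed
  also have "\<dots> = ennreal (\<Sum>k. VV q k * c (XX q k) * (2 * ln q))"
    using h VV_pos[of q] assms(2) sm[THEN summable_mult2]
    by (intro suminf_ennreal2) (auto simp: less_imp_le)
  also have "(\<Sum>k. VV q k * c (XX q k) * (2 * ln q)) = 2 * ln q * (\<Sum>k. VV q k * c (XX q k))"
    using suminf_mult2[OF sm, of "2 * ln q"] by (simp add: mult.commute)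
  finally show ?thesis .
qed

lemma cell_iff:
  assumes "q > 1" "ln (q - 1) \<le> t"
  shows "(XX q k \<le> t \<and> t < XX q k + 2 * ln q) \<longleftrightarrow> k = nat \<lfloor>(t - ln (q - 1)) / (2 * ln q)\<rfloor>"
proof -
  define s where "s = (t - ln (q - 1)) / (2 * ln q)"
  have h: "0 < 2 * ln q" using assms by simp
  have s0: "0 \<le> s" unfolding s_def using assms h by simp
  have "(XX q k \<le> t \<and> t < XX q k + 2 * ln q) \<longleftrightarrow> (real k \<le> s \<and> s < real k + 1)"
    unfolding s_def XX_def using h by (simp add: field_simps)
  also have "\<dots> \<longleftrightarrow> \<lfloor>s\<rfloor> = int k" by (simp add: floor_eq_iff)
  also have "\<dots> \<longleftrightarrow> k = nat \<lfloor>s\<rfloor>" using s0 by linarith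
  finally show ?thesis unfolding s_def .
qed

lemma XX_mono: assumes "q > 1" shows "ln (q - 1) \<le> XX q k"
  unfolding XX_def using assms by simp

lemma UU_zero: assumes "q > 1" "t < ln (q - 1)" shows "UU c q t = 0"
proof -
  have "\<And>k. (indicator {XX q k ..< XX q k + 2 * ln q} t :: ennreal) = 0"
    using XX_mono[OF assms(1)] assms(2) by (smt (verit) atLeastLessThan_iff indicator_simps(2))
  then show ?thesis unfolding UU_def by simp
qed
  
lemma UU_cell: assumes "q > 1" "ln (q - 1) \<le> t"
  defines "k0 \<equiv> nat \<lfloor>(t - ln (q - 1)) / (2 * ln q)\<rfloor>"
  shows "UU c q t = ennreal (VV q k0 * c (XX q k0))" "XX q k0 \<le> t" "t < XX q k0 + 2 * ln q"
proof -
  show "XX q k0 \<le> t" "t < XX q k0 + 2 * ln q" using cell_iff[OF assms(1,2), of k0] k0_def by auto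
  have "UU c q t = (\<Sum>k. if k = k0 then ennreal (VV q k0 * c (XX q k0)) else 0)"
    unfolding UU_def
    by (intro suminf_cong) (use cell_iff[OF assms(1,2)] in \<open>auto simp: k0_def split: split_indicator\<close>)
  also have "\<dots> = ennreal (VV q k0 * c (XX q k0))"
    using sums_single[of k0 "\<lambda>_. ennreal (VV q k0 * c (XX q k0))"] by (simp add: sums_iff)
  finally show "UU c q t = ennreal (VV q k0 * c (XX q k0))" .
qed

lemma exp_mXX: assumes "q > 1" shows "exp (- XX q k) = inverse q ^ (2 * k) / (q - 1)"
proof -
  have "exp (- XX q k) = exp (- XX q k / 2) ^ 2" by (simp add: exp_of_nat_mult[symmetric])
  also have "\<dots> = inverse q ^ (2 * k) / (q - 1)"
    unfolding exp_XX[OF assms] using assms by (simp add: power_divide power_mult mult.commute)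
  finally show ?thesis .
qed

lemma PP_XX: assumes "q > 1"
  shows "PP q ^ (k+1) / (1 - PP q) = exp (- XX q k) / (q + 1)"
    "PP q ^ (k+1) = (q - 1) * exp (- XX q k) / q ^ 2"
proof -
  have "1 < q * q" using assms by (metis less_1_mult)
  then have q0: "q \<noteq> 0" "q - 1 \<noteq> 0" "q + 1 \<noteq> 0" "q^2 - 1 \<noteq> 0" using assms
    by (auto simp: power2_eq_square)
  have PK: "PP q ^ k = inverse q ^ (2 * k)" unfolding PP_def by (simp only: power_mult)
  show "PP q ^ (k+1) = (q - 1) * exp (- XX q k) / q ^ 2"
    unfolding exp_mXX[OF assms] power_add PK using q0 by (simp add: PP_def field_simps)
  have "1 - PP q = (q^2 - 1) / q^2" unfolding PP_def using q0 by (simp add: field_simps)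
  moreover have "q^2 - 1 = (q - 1) * (q + 1)" by (simp add: power2_eq_square algebra_simps)
  ultimately show "PP q ^ (k+1) / (1 - PP q) = exp (- XX q k) / (q + 1)"
    unfolding exp_mXX[OF assms] power_add PK using q0 by (simp add: PP_def field_simps)
qed

lemma GG_lower: assumes "q > 1" shows "exp (- XX q k) / (q + 1) \<le> GG q k"
  using GG_bounds(1)[OF assms, of k] unfolding PP_XX(1)[OF assms] .

lemma GG_upper: assumes "q > 1"
  shows "GG q k \<le> exp (- XX q k) / (q + 1) / (1 - (q - 1) * exp (- XX q k) / q ^ 2)"
proof -
  have e: "PP q ^ (k+1) / (1 - PP q) / (1 - PP q ^ (k+1)) = exp (- XX q k) / (q + 1) / (1 - PP q ^ (k+1))"
    by (subst PP_XX(1)[OF assms]) (rule refl)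
  have "GG q k \<le> PP q ^ (k+1) / (1 - PP q) / (1 - PP q ^ (k+1))" by (rule GG_bounds(2)[OF assms])
  also have "\<dots> = exp (- XX q k) / (q + 1) / (1 - PP q ^ (k+1))" by (rule e)
  also have "\<dots> = exp (- XX q k) / (q + 1) / (1 - (q - 1) * exp (- XX q k) / q ^ 2)"
    by (subst PP_XX(2)[OF assms]) (rule refl)
  finally show ?thesis .
qed

lemma UU_bound: assumes "q > 1" "q \<le> 2" "\<And>y. 0 \<le> c y" "\<And>y. c y \<le> 1"
  shows "UU c q t \<le> ennreal (exp 1 * exp (- t / 2 - exp (- t) / 3))"
proof (cases "t < ln (q - 1)")
  case True then show ?thesis using UU_zero[OF assms(1)] by simp
next
  case False
  define k0 where "k0 = nat \<lfloor>(t - ln (q - 1)) / (2 * ln q)\<rfloor>"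
  have le: "ln (q - 1) \<le> t" using False by simp
  note cell = UU_cell[OF assms(1) le, folded k0_def]
  define y where "y = XX q k0"
  have y1: "y \<le> t" "t < y + 2 * ln q" using cell False unfolding y_def by auto
  have "ln q \<le> ln 2" using assms by simp
  then have lq: "ln q < 1" using ln_2_less_1 by linarith
  have "VV q k0 * c y \<le> VV q k0" using VV_pos[of q k0] assms(3,4)[of y] by (simp add: mult_left_le)
  also have "VV q k0 \<le> exp (- y / 2 - exp (- y) / (q + 1))"
    unfolding VV_def y_def using GG_lower[OF assms(1), of k0] by simp
  also have "\<dots> \<le> exp (1 + (- t / 2 - exp (- t) / 3))"
  proof -
    have "exp (- t) \<le> exp (- y)" using y1 by simp
    moreover have "exp (- t) / 3 \<le> exp (- t) / (q + 1)" using assms by (intro divide_left_mono) auto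
    ultimately have "exp (- t) / 3 \<le> exp (- y) / (q + 1)" using assms
      by (smt (verit, ccfv_SIG) divide_right_mono)
    then show ?thesis using y1 lq by simp
  qed
  also have "\<dots> = exp 1 * exp (- t / 2 - exp (- t) / 3)" by (simp add: exp_add)
  finally show ?thesis using cell(1) unfolding y_def by (simp add: ennreal_leI)
qed

definition fh :: "real \<Rightarrow> real" where "fh t = exp (t / 2 - exp t / 2)"

lemma gauss_half:
  "has_bochner_integral lborel (\<lambda>x::real. indicator {0<..} x *\<^sub>R exp (- x\<^sup>2)) (sqrt pi / 2)"
proof -
  have "AE x in lborel. indicator {0..} x *\<^sub>R exp (- x\<^sup>2) = indicator {0<..} x *\<^sub>R exp (- (x::real)\<^sup>2)"
    using AE_lborel_singleton[of "0::real"] by eventually_elim (auto split: split_indicator)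
  note ae = this
  have "has_bochner_integral lborel (\<lambda>x. indicator {0..} x *\<^sub>R exp (- x\<^sup>2)) (sqrt pi / 2) \<longleftrightarrow>
     has_bochner_integral lborel (\<lambda>x. indicator {0<..} x *\<^sub>R exp (- (x::real)\<^sup>2)) (sqrt pi / 2)"
    by (rule has_bochner_integral_cong_AE[OF _ _ ae]) simp_all
  from iffD1[OF this gaussian_moment_0] show ?thesis .
qed

lemma fh_g: "0 < s \<Longrightarrow> fh (ln 2 + 2 * ln s) * (2 / s) = 2 * sqrt 2 * exp (- s\<^sup>2)"
proof -
  assume s: "0 < s"
  have e0: "exp (2 * ln s) = s * s" by (simp only: mult_2 exp_add exp_ln[OF s])
  have e1: "exp (ln 2 + 2 * ln s) = 2 * s\<^sup>2"
    by (simp only: exp_add e0) (simp add: power2_eq_square)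
  have e2: "exp ((ln 2 + 2 * ln s) / 2) = sqrt 2 * s"
  proof -
    have "(ln 2 + 2 * ln s) / 2 = ln 2 / 2 + ln s" by simp
    moreover have "exp (ln 2 / 2) = sqrt (2::real)" by (rule exp_half_ln) simp
    ultimately show ?thesis using s by (simp only: exp_add exp_ln[OF s])
  qed
  have h: "exp (ln 2 + 2 * ln s) / 2 = s\<^sup>2" unfolding e1 by simp
  have "fh (ln 2 + 2 * ln s) = sqrt 2 * s * exp (- s\<^sup>2)"
    unfolding fh_def h diff_conv_add_uminus by (subst exp_add) (simp only: e2)
  then show ?thesis using s by simp
qed

lemma fh_int:
  shows "set_integrable lborel (einterval (-\<infinity>) \<infinity>) fh"
    "(LBINT x=-\<infinity>..\<infinity>. fh x) = (LBINT x=0..\<infinity>. fh (ln 2 + 2 * ln x) * (2 / x))"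
proof -
  have deriv: "\<And>x. 0 < ereal x \<Longrightarrow> ereal x < \<infinity> \<Longrightarrow> DERIV (\<lambda>s. ln 2 + 2 * ln s) x :> 2 / x"
    by (rule derivative_eq_intros refl)+ auto
  have contf: "\<And>x. isCont fh x" unfolding fh_def by (intro continuous_intros) auto
  have contg': "isCont (\<lambda>s. 2 / s) x" if "0 < ereal x" for x
  proof -
    from that have "x \<noteq> 0" by auto
    then show "isCont (\<lambda>s. 2 / s) (x::real)" by (intro continuous_intros) auto
  qed
  have fnn: "\<And>x. 0 \<le> fh x" unfolding fh_def by simp
  have g'nn: "\<And>x. 0 \<le> ereal x \<Longrightarrow> ereal x \<le> \<infinity> \<Longrightarrow> 0 \<le> 2 / x" by simp
  have A: "filterlim (\<lambda>s. ln 2 + 2 * ln s) at_bot (at_right (0::real))"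
    by (subst filterlim_tendsto_add_at_bot_iff[OF tendsto_const])
       (rule filterlim_tendsto_pos_mult_at_bot[OF tendsto_const _ ln_at_0]; simp)
  have B: "filterlim (\<lambda>s::real. ln 2 + 2 * ln s) at_top at_top"
  proof -
    have "filterlim (\<lambda>s::real. 2 * ln s) at_top at_top"
      by (rule filterlim_tendsto_pos_mult_at_top[OF tendsto_const _ ln_at_top]) simp
    then show ?thesis by (rule filterlim_tendsto_add_at_top[OF tendsto_const])
  qed
  have int: "set_integrable lborel (einterval 0 \<infinity>) (\<lambda>x. fh (ln 2 + 2 * ln x) * (2 / x))"
  proof -
    have "integrable lborel (\<lambda>x::real. indicator {0<..} x *\<^sub>R exp (- x\<^sup>2) :: real)"
      using gauss_half by (rule integrable.intros)
    then have "integrable lborel (\<lambda>x::real. 2 * sqrt 2 * (indicator {0<..} x *\<^sub>R exp (- x\<^sup>2)) :: real)"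
      by (rule integrable_mult_right)
    moreover have "(\<lambda>x::real. 2 * sqrt 2 * (indicator {0<..} x *\<^sub>R exp (- x\<^sup>2)) :: real) =
        (\<lambda>x. indicator (einterval 0 \<infinity>) x *\<^sub>R (fh (ln 2 + 2 * ln x) * (2 / x)))"
    proof
      fix x :: real
      show "2 * sqrt 2 * (indicator {0<..} x *\<^sub>R exp (- x\<^sup>2)) =
        indicator (einterval 0 \<infinity>) x *\<^sub>R (fh (ln 2 + 2 * ln x) * (2 / x))"
      proof (cases "0 < x")
        case True
        then show ?thesis using fh_g[OF True] by (simp add: einterval_def)
      qed (simp add: einterval_def)
    qed
    ultimately show ?thesis unfolding set_integrable_def by metis
  qed
  note sub = interval_integral_substitution_nonneg[of 0 \<infinity> "\<lambda>s. ln 2 + 2 * ln s" "\<lambda>s. 2 / s" fh "-\<infinity>" \<infinity>]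
  show "set_integrable lborel (einterval (-\<infinity>) \<infinity>) fh"
    "(LBINT x=-\<infinity>..\<infinity>. fh x) = (LBINT x=0..\<infinity>. fh (ln 2 + 2 * ln x) * (2 / x))"
    by (rule sub; (use deriv contf contg' fnn g'nn A B int in \<open>auto simp: ereal_tendsto_simps zero_ereal_def\<close>))+
qed

lemma ftil_fh: "ftil (0 + (-1) * x) = fh x"
  unfolding ftil_def fh_def by simp

lemma ftil_nn_integral: "(\<integral>\<^sup>+t. ennreal (ftil t) \<partial>lborel) = ennreal (sqrt (2 * pi))"
proof -
  have "(\<integral>\<^sup>+t. ennreal (ftil t) \<partial>lborel) = ennreal \<bar>-1\<bar> * (\<integral>\<^sup>+x. ennreal (ftil (0 + (-1) * x)) \<partial>lborel)"
    by (rule nn_integral_real_affine) (auto simp: ftil_def)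
  also have "\<dots> = (\<integral>\<^sup>+x. ennreal (fh x) \<partial>lborel)" unfolding ftil_fh by simp
  also have "\<dots> = ennreal (integral\<^sup>L lborel fh)"
  proof (rule nn_integral_eq_integral)
    show "integrable lborel fh" using fh_int(1) unfolding set_integrable_def einterval_eq_UNIV by simp
    show "AE x in lborel. 0 \<le> fh x" unfolding fh_def by simp
  qed
  also have "integral\<^sup>L lborel fh = (LBINT x=-\<infinity>..\<infinity>. fh x)"
    unfolding interval_lebesgue_integral_def set_lebesgue_integral_def einterval_eq_UNIV by simp
  also have "\<dots> = (LBINT x=0..\<infinity>. fh (ln 2 + 2 * ln x) * (2 / x))" by (rule fh_int(2))
  also have "\<dots> = (LBINT x:{0<..}. fh (ln 2 + 2 * ln x) * (2 / x))"
    by (subst interval_integral_Ioi) auto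
  also have "\<dots> = integral\<^sup>L lborel (\<lambda>x::real. 2 * sqrt 2 * (indicator {0<..} x *\<^sub>R exp (- x\<^sup>2)) :: real)"
    unfolding set_lebesgue_integral_def
  proof (rule Bochner_Integration.integral_cong[OF refl])
    fix x :: real
    show "indicator {0<..} x *\<^sub>R (fh (ln 2 + 2 * ln x) * (2 / x)) = 2 * sqrt 2 * (indicator {0<..} x *\<^sub>R exp (- x\<^sup>2))"
    proof (cases "0 < x")
      case True
      then show ?thesis using fh_g[OF True] by simp
    qed simp
  qed
  also have "\<dots> = 2 * sqrt 2 * (sqrt pi / 2)"
    using has_bochner_integral_mult_right[OF gauss_half, of "2 * sqrt 2"]
    by (rule has_bochner_integral_integral_eq)
  also have "\<dots> = sqrt (2 * pi)" by (simp add: real_sqrt_mult)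
  finally show ?thesis .
qed

lemma ftil_pos: "0 < ftil t" unfolding ftil_def by simp

lemma D_eq: "exp (- t / 2 - exp (- t) / 3) = sqrt (3/2) * ftil (t + ln (3/2))"
proof -
  have e: "exp (- ln (3/2)) = (2/3::real)" by (simp add: exp_minus)
  have a: "exp (- (t + ln (3/2))) = exp (- t) * (2/3)"
    by (simp only: minus_add_distrib exp_add e)
  have b: "exp (- (ln (3/2) / 2)) = 1 / sqrt (3/2)"
  proof -
    have "exp (ln (3/2) / 2) = sqrt (3/2::real)" by (rule exp_half_ln) simp
    then show ?thesis unfolding exp_minus by (simp add: inverse_eq_divide)
  qed
  have arg: "- (t + ln (3/2)) / 2 - exp (- t) * (2/3) / 2 = (- t / 2 - exp (- t) / 3) + - (ln (3/2) / 2)"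
    by (simp add: field_simps)
  have "ftil (t + ln (3/2)) = exp (- t / 2 - exp (- t) / 3) / sqrt (3/2)"
    unfolding ftil_def a arg exp_add b by simp
  then show ?thesis by simp
qed

lemma D_finite: "(\<integral>\<^sup>+t. ennreal (exp 1 * exp (- t / 2 - exp (- t) / 3)) \<partial>lborel) < \<infinity>"
proof -
  have "(\<integral>\<^sup>+t. ennreal (exp 1 * exp (- t / 2 - exp (- t) / 3)) \<partial>lborel)
      = (\<integral>\<^sup>+t. ennreal (exp 1 * sqrt (3/2)) * ennreal (ftil (ln (3/2) + 1 * t)) \<partial>lborel)"
  proof (intro nn_integral_cong)
    fix t :: real
    have "exp 1 * exp (- t / 2 - exp (- t) / 3) = exp 1 * sqrt (3/2) * ftil (ln (3/2) + 1 * t)"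
      unfolding D_eq by (simp add: add.commute)
    then show "ennreal (exp 1 * exp (- t / 2 - exp (- t) / 3)) = ennreal (exp 1 * sqrt (3/2)) * ennreal (ftil (ln (3/2) + 1 * t))"
      using ftil_pos[of "ln (3/2) + 1 * t"] by (simp add: ennreal_mult mult.assoc)
  qed
  also have "\<dots> = ennreal (exp 1 * sqrt (3/2)) * (\<integral>\<^sup>+t. ennreal (ftil (ln (3/2) + 1 * t)) \<partial>lborel)"
    by (rule nn_integral_cmult) (simp add: ftil_def)
  also have "(\<integral>\<^sup>+t. ennreal (ftil (ln (3/2) + 1 * t)) \<partial>lborel) = (\<integral>\<^sup>+t. ennreal (ftil t) \<partial>lborel)"
    using nn_integral_real_affine[of "\<lambda>t. ennreal (ftil t)" 1 "ln (3/2)"] by (simp add: ftil_def)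
  finally show ?thesis by (simp add: ftil_nn_integral ennreal_mult_less_top)
qed

lemma UU_lim:
  assumes qs: "\<And>n. qs n > 1" "qs \<longlonglongrightarrow> 1" and c: "isCont c t"
  shows "(\<lambda>n. UU c (qs n) t) \<longlonglongrightarrow> ennreal (ftil t * c t)"
proof -
  define k where "k n = nat \<lfloor>(t - ln (qs n - 1)) / (2 * ln (qs n))\<rfloor>" for n
  define y where "y n = XX (qs n) (k n)" for n
  have q1: "(\<lambda>n. qs n - 1) \<longlonglongrightarrow> 0" using tendsto_diff[OF qs(2) tendsto_const[of 1]] by simp
  have ev: "eventually (\<lambda>n. qs n - 1 < exp t) sequentially"
    using order_tendstoD(2)[OF q1, of "exp t"] by simp
  have evle: "eventually (\<lambda>n. ln (qs n - 1) \<le> t) sequentially"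
    using ev
  proof eventually_elim
    case (elim n)
    have "ln (qs n - 1) < ln (exp t)" using elim qs(1)[of n] by (subst ln_less_cancel_iff) auto
    then show ?case by simp
  qed
  have cellev: "eventually (\<lambda>n. UU c (qs n) t = ennreal (VV (qs n) (k n) * c (y n)) \<and>
      y n \<le> t \<and> t < y n + 2 * ln (qs n)) sequentially"
    using evle
  proof eventually_elim
    case (elim n)
    note cl = UU_cell[OF qs(1) elim]
    show ?case using cl(1)[of c] cl(2,3) unfolding k_def[symmetric] y_def[symmetric] by simp
  qed
  have lnq: "(\<lambda>n. ln (qs n)) \<longlonglongrightarrow> 0" using tendsto_ln[OF qs(2)] by simp
  have ylim: "y \<longlonglongrightarrow> t"
  proof (rule tendsto_sandwich[of "\<lambda>n. t - 2 * ln (qs n)" _ _ "\<lambda>n. t"])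
    show "eventually (\<lambda>n. t - 2 * ln (qs n) \<le> y n) sequentially"
      using cellev by eventually_elim auto
    show "eventually (\<lambda>n. y n \<le> t) sequentially"
      using cellev by eventually_elim auto
    show "(\<lambda>n. t - 2 * ln (qs n)) \<longlonglongrightarrow> t" using tendsto_diff[OF tendsto_const[of t] tendsto_mult[OF tendsto_const[of 2] lnq]] by simp
  qed simp
  have ey: "(\<lambda>n. exp (- y n)) \<longlonglongrightarrow> exp (- t)" by (intro tendsto_intros ylim)
  have lowlim: "(\<lambda>n. exp (- y n) / (qs n + 1)) \<longlonglongrightarrow> exp (- t) / 2"
    using tendsto_divide[OF ey tendsto_add[OF qs(2) tendsto_const[of 1]]] by simp
  have uplim: "(\<lambda>n. exp (- y n) / (qs n + 1) / (1 - (qs n - 1) * exp (- y n) / qs n ^ 2)) \<longlonglongrightarrow> exp (- t) / 2"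
  proof -
    have "(\<lambda>n. (qs n - 1) * exp (- y n) / qs n ^ 2) \<longlonglongrightarrow> 0 * exp (- t) / 1 ^ 2"
      by (intro tendsto_intros q1 ey qs(2)) simp
    then have "(\<lambda>n. 1 - (qs n - 1) * exp (- y n) / qs n ^ 2) \<longlonglongrightarrow> 1"
      using tendsto_diff[OF tendsto_const[of 1]] by fastforce
    from tendsto_divide[OF lowlim this] show ?thesis by simp
  qed
  have Glim: "(\<lambda>n. GG (qs n) (k n)) \<longlonglongrightarrow> exp (- t) / 2"
  proof (rule tendsto_sandwich[OF _ _ lowlim uplim])
    show "eventually (\<lambda>n. exp (- y n) / (qs n + 1) \<le> GG (qs n) (k n)) sequentially"
      unfolding y_def using GG_lower[OF qs(1)] by simp
    show "eventually (\<lambda>n. GG (qs n) (k n) \<le> exp (- y n) / (qs n + 1) / (1 - (qs n - 1) * exp (- y n) / qs n ^ 2)) sequentially"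
      unfolding y_def using GG_upper[OF qs(1)] by simp
  qed
  have Vlim: "(\<lambda>n. VV (qs n) (k n)) \<longlonglongrightarrow> ftil t"
    unfolding VV_def ftil_def y_def[symmetric]
    by (intro tendsto_intros ylim Glim) auto
  have clim: "(\<lambda>n. c (y n)) \<longlonglongrightarrow> c t" by (rule isCont_tendsto_compose[OF c ylim])
  have "(\<lambda>n. ennreal (VV (qs n) (k n) * c (y n))) \<longlonglongrightarrow> ennreal (ftil t * c t)"
    by (intro tendsto_ennrealI tendsto_mult Vlim clim)
  then show ?thesis
    by (rule Lim_transform_eventually) (use cellev in \<open>eventually_elim, simp\<close>)
qed

lemma UU_meas: "UU c q \<in> borel_measurable lborel"
  unfolding UU_def by measurable

lemma UU_int_lim:
  assumes qs: "\<And>n. qs n > 1" "qs \<longlonglongrightarrow> 1"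
    and cm: "c \<in> borel_measurable borel" and c0: "\<And>y. 0 \<le> c y" and c1: "\<And>y. c y \<le> 1"
    and cc: "AE t in lborel. isCont c t"
  shows "(\<lambda>n. \<integral>\<^sup>+t. UU c (qs n) t \<partial>lborel) \<longlonglongrightarrow> (\<integral>\<^sup>+t. ennreal (ftil t * c t) \<partial>lborel)"
proof -
  have "eventually (\<lambda>n. qs n < 2) sequentially" using order_tendstoD(2)[OF qs(2), of 2] by simp
  then obtain N where N: "\<And>n. n \<ge> N \<Longrightarrow> qs n < 2" unfolding eventually_sequentially by blast
  have "(\<lambda>n. \<integral>\<^sup>+t. UU c (qs (n + N)) t \<partial>lborel) \<longlonglongrightarrow> (\<integral>\<^sup>+t. ennreal (ftil t * c t) \<partial>lborel)"
  proof (rule nn_integral_dominated_convergence[where w="\<lambda>t. ennreal (exp 1 * exp (- t / 2 - exp (- t) / 3))"])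
    show "\<And>i. UU c (qs (i + N)) \<in> borel_measurable lborel" by (rule UU_meas)
    show "(\<lambda>t. ennreal (ftil t * c t)) \<in> borel_measurable lborel"
      using cm unfolding ftil_def by measurable
    show "(\<lambda>t. ennreal (exp 1 * exp (- t / 2 - exp (- t) / 3))) \<in> borel_measurable lborel"
      by measurable
    show "\<And>j. AE t in lborel. UU c (qs (j + N)) t \<le> ennreal (exp 1 * exp (- t / 2 - exp (- t) / 3))"
      using UU_bound[OF qs(1) _ c0 c1] N by (simp add: less_imp_le)
    show "(\<integral>\<^sup>+t. ennreal (exp 1 * exp (- t / 2 - exp (- t) / 3)) \<partial>lborel) < \<infinity>"
      by (rule D_finite)
    show "AE t in lborel. (\<lambda>i. UU c (qs (i + N)) t) \<longlonglongrightarrow> ennreal (ftil t * c t)"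
      using cc
    proof eventually_elim
      case (elim t)
      have "(\<lambda>i. qs (i + N)) \<longlonglongrightarrow> 1" using qs(2) by (rule LIMSEQ_ignore_initial_segment)
      from UU_lim[of "\<lambda>i. qs (i + N)", OF qs(1) this elim] show ?case .
    qed
  qed
  then show ?thesis by (rule LIMSEQ_offset)
qed

lemma limit_density_eq: "limit_density t = ftil t / sqrt (2 * pi)"
  unfolding limit_density_def ftil_def by (simp add: field_simps)

lemma cdf_limit: "cdf limit_law x = enn2real (\<integral>\<^sup>+t. ennreal (ftil t * indicator {..x} t) \<partial>lborel) / sqrt (2 * pi)"
proof -
  have m: "(\<lambda>t. ennreal (limit_density t)) \<in> borel_measurable lborel"
    unfolding limit_density_def by measurable
  have "emeasure limit_law {..x} = (\<integral>\<^sup>+t. ennreal (limit_density t) * indicator {..x} t \<partial>lborel)"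
    unfolding limit_law_def by (rule emeasure_density[OF m]) simp
  also have "\<dots> = (\<integral>\<^sup>+t. ennreal (1 / sqrt (2 * pi)) * ennreal (ftil t * indicator {..x} t) \<partial>lborel)"
  proof (rule nn_integral_cong)
    fix t
    show "ennreal (limit_density t) * indicator {..x} t = ennreal (1 / sqrt (2 * pi)) * ennreal (ftil t * indicator {..x} t)"
      using ftil_pos[of t] by (auto simp: limit_density_eq ennreal_mult[symmetric] split: split_indicator)
  qed
  also have "\<dots> = ennreal (1 / sqrt (2 * pi)) * (\<integral>\<^sup>+t. ennreal (ftil t * indicator {..x} t) \<partial>lborel)"
    by (rule nn_integral_cmult) (unfold ftil_def, measurable)
  finally show ?thesis unfolding cdf_def measure_def by (simp add: enn2real_mult)
qed

theorem proposition6p2: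
  fixes qs :: "nat \<Rightarrow> real"
  assumes "\<And>n. qs n > 1" and "qs \<longlonglongrightarrow> 1"
  shows "weak_conv_m (\<lambda>n. scaled_law (qs n)) limit_law"
  unfolding weak_conv_m_def weak_conv_def
proof (intro allI impI)
  fix x :: real
  define c1 :: "real \<Rightarrow> real" where "c1 = indicator {..x}"
  define c0 :: "real \<Rightarrow> real" where "c0 = (\<lambda>_. 1)"
  have c1p: "\<And>y. 0 \<le> c1 y" "\<And>y. c1 y \<le> 1" unfolding c1_def by (auto split: split_indicator)
  have c0p: "\<And>y. 0 \<le> c0 y" "\<And>y. c0 y \<le> 1" unfolding c0_def by auto
  have eq: "cdf (scaled_law (qs n)) x =
      enn2real (\<integral>\<^sup>+t. UU c1 (qs n) t \<partial>lborel) / enn2real (\<integral>\<^sup>+t. UU c0 (qs n) t \<partial>lborel)" for n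
  proof -
    have q: "qs n > 1" by (rule assms(1))
    have h: "0 < 2 * ln (qs n)" using q by simp
    have A1: "0 \<le> (\<Sum>k. VV (qs n) k * c1 (XX (qs n) k))"
    proof (rule suminf_nonneg[OF summable_VV_c[OF q c1p]])
      fix k show "0 \<le> VV (qs n) k * c1 (XX (qs n) k)"
        using VV_pos[of "qs n" k] c1p(1)[of "XX (qs n) k"] by simp
    qed
    have A0: "0 < (\<Sum>k. VV (qs n) k * c0 (XX (qs n) k))" using sumVV_pos[OF q] unfolding c0_def by simp
    have "enn2real (\<integral>\<^sup>+t. UU c1 (qs n) t \<partial>lborel) / enn2real (\<integral>\<^sup>+t. UU c0 (qs n) t \<partial>lborel)
       = (2 * ln (qs n) * (\<Sum>k. VV (qs n) k * c1 (XX (qs n) k))) / (2 * ln (qs n) * (\<Sum>k. VV (qs n) k * c0 (XX (qs n) k)))"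
    proof -
      have p1: "0 \<le> 2 * ln (qs n) * (\<Sum>k. VV (qs n) k * c1 (XX (qs n) k))" using h A1 by simp
      have p0: "0 \<le> 2 * ln (qs n) * (\<Sum>k. VV (qs n) k * c0 (XX (qs n) k))" using h A0 by simp
      show ?thesis unfolding UU_integral[OF q c1p] UU_integral[OF q c0p]
        by (simp only: enn2real_ennreal[OF p1] enn2real_ennreal[OF p0])
    qed
    also have "\<dots> = (\<Sum>k. VV (qs n) k * c1 (XX (qs n) k)) / (\<Sum>k. VV (qs n) k * c0 (XX (qs n) k))"
      by (rule mult_divide_mult_cancel_left) (use h in simp)
    also have "\<dots> = cdf (scaled_law (qs n)) x"
      unfolding cdf_formula[OF q] c1_def c0_def by simp
    finally show ?thesis by simp
  qed
  have c1m: "c1 \<in> borel_measurable borel" unfolding c1_def by simp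
  have c1c: "AE t in lborel. isCont c1 t"
    using AE_lborel_singleton[of x] by eventually_elim (simp add: c1_def isCont_indicator frontier_real_atMost)
  have L1: "(\<lambda>n. \<integral>\<^sup>+t. UU c1 (qs n) t \<partial>lborel) \<longlonglongrightarrow> (\<integral>\<^sup>+t. ennreal (ftil t * c1 t) \<partial>lborel)"
    by (rule UU_int_lim[OF assms c1m c1p c1c])
  have L0: "(\<lambda>n. \<integral>\<^sup>+t. UU c0 (qs n) t \<partial>lborel) \<longlonglongrightarrow> (\<integral>\<^sup>+t. ennreal (ftil t * c0 t) \<partial>lborel)"
    by (rule UU_int_lim[OF assms _ c0p]) (simp_all add: c0_def)
  have B0: "(\<integral>\<^sup>+t. ennreal (ftil t * c0 t) \<partial>lborel) = ennreal (sqrt (2 * pi))"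
    unfolding c0_def using ftil_nn_integral by simp
  have "(\<integral>\<^sup>+t. ennreal (ftil t * c1 t) \<partial>lborel) \<le> (\<integral>\<^sup>+t. ennreal (ftil t) \<partial>lborel)"
  proof (rule nn_integral_mono)
    fix t
    have "ftil t * c1 t \<le> ftil t" using ftil_pos[of t] c1p[of t] by (simp add: mult_left_le)
    then show "ennreal (ftil t * c1 t) \<le> ennreal (ftil t)" by (rule ennreal_leI)
  qed
  then have B1fin: "(\<integral>\<^sup>+t. ennreal (ftil t * c1 t) \<partial>lborel) < \<infinity>"
    unfolding ftil_nn_integral by (rule le_less_trans) simp
  define b1 where "b1 = enn2real (\<integral>\<^sup>+t. ennreal (ftil t * c1 t) \<partial>lborel)"
  have b1e: "(\<integral>\<^sup>+t. ennreal (ftil t * c1 t) \<partial>lborel) = ennreal b1"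
    unfolding b1_def by (rule ennreal_enn2real[symmetric]) (use B1fin in simp)
  have "(\<lambda>n. enn2real (\<integral>\<^sup>+t. UU c1 (qs n) t \<partial>lborel) / enn2real (\<integral>\<^sup>+t. UU c0 (qs n) t \<partial>lborel))
      \<longlonglongrightarrow> b1 / sqrt (2 * pi)"
  proof -
    have T1: "(\<lambda>n. enn2real (\<integral>\<^sup>+t. UU c1 (qs n) t \<partial>lborel)) \<longlonglongrightarrow> b1"
      by (rule tendsto_enn2real[OF L1[unfolded b1e]]) (simp add: b1_def)
    have T0: "(\<lambda>n. enn2real (\<integral>\<^sup>+t. UU c0 (qs n) t \<partial>lborel)) \<longlonglongrightarrow> sqrt (2 * pi)"
      by (rule tendsto_enn2real[OF L0[unfolded B0]]) simp
    show ?thesis by (rule tendsto_divide[OF T1 T0]) simp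
  qed
  moreover have "b1 / sqrt (2 * pi) = cdf limit_law x"
    unfolding cdf_limit b1_def c1_def ..
  ultimately show "(\<lambda>n. cdf (scaled_law (qs n)) x) \<longlonglongrightarrow> cdf limit_law x"
    unfolding eq by simp
qed

end
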